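(* Let $m_{max} \ge 1$ be a fixed positive integer. Then \[ \pi = i \lim_{k\to\infty} 2^{k+1} \sum_{m=1}^{m_{max}} \frac{1}{2m-1}\left( \frac{1}{\left(1 + 2i\, a_k/\sqrt{2 - a_{k-1}}\right)^{2m-1}} - \frac{1}{\left(1 - 2i\, a_k/\sqrt{2 - a_{k-1}}\right)^{2m-1}} \right). \]
   Context: Here $i$ is the imaginary unit. The nested radicals $a_k$ are defined by $a_0 = 0$ and $a_k = \sqrt{2 + a_{k-1}}$ for $k \ge 1$. Thus $a_k = \sqrt{2+\sqrt{2+\cdots+\sqrt{2}}}$ with $k$ square roots. *)

theory Defs
  imports Complex_Main
begin

fun nested_rad :: "nat \<Rightarrow> real" where
  "nested_rad 0 = 0"
| "nested_rad (Suc k) = sqrt (2 + nested_rad k)"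

end

theory Submission imports Defs "HOL-Real_Asymp.Real_Asymp" begin

lemma rad_cos: "nested_rad k = 2 * cos (pi / 2^(k+1))"
proof (induction k)
  case 0 then show ?case by simp
next
  case (Suc k)
  define x where "x = pi / 2^(k+2)"
  have x2: "pi / 2^(k+1) = 2 * x" unfolding x_def by (simp add: field_simps)
  have "(1::real) \<le> 2^k" "(1::real) < 2*2^k" using one_le_power[of "2::real" k] by linarith+
  then have xpos: "0 < x" "x \<le> pi/2" unfolding x_def by (auto simp: field_simps)
  have c: "cos x \<ge> 0" using xpos by (intro cos_ge_zero) auto
  have "2 + nested_rad k = (2 * cos x)^2"
    using Suc x2 cos_double_cos[of x] by simp
  then have "nested_rad (Suc k) = sqrt ((2 * cos x)^2)" by (simp only: nested_rad.simps)
  also have "\<dots> = 2 * cos x" using c by (intro real_sqrt_unique) auto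
  finally have "nested_rad (Suc k) = 2 * cos x" .
  then show ?case unfolding x_def by (simp add: add.commute)
qed

lemma rad_sin: assumes "k \<ge> 1" shows "sqrt (2 - nested_rad (k - 1)) = 2 * sin (pi / 2^(k+1))"
proof -
  define x where "x = pi / 2^(k+1)"
  have x2: "pi / 2^(k-1+1) = 2 * x" unfolding x_def using assms
    by (cases k) (auto simp: field_simps)
  have "(1::real) \<le> 2^k" "(1::real) < 2*2^k" using one_le_power[of "2::real" k] by linarith+
  then have xpos: "0 < x" "x < pi" unfolding x_def by (auto simp: field_simps)
  have s: "sin x \<ge> 0" using xpos by (intro sin_ge_zero) auto
  have "2 - nested_rad (k-1) = (2 * sin x)^2"
    using x2 cos_double_sin[of x] by (simp add: rad_cos power2_eq_square)
  then have "sqrt (2 - nested_rad (k - 1)) = sqrt ((2 * sin x)^2)" by (simp only:)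
  also have "\<dots> = 2 * sin x" using s by (intro real_sqrt_unique) auto
  finally show ?thesis unfolding x_def .
qed

lemma ratio: assumes "k \<ge> 1"
  shows "nested_rad k / sqrt (2 - nested_rad (k - 1)) = 1 / tan (pi / 2^(k+1))"
  unfolding rad_sin[OF assms] by (simp add: rad_cos tan_def)

lemma pointwise:
  fixes t :: real and P :: complex and n :: nat
  assumes "t > 0" "n \<ge> 1"
  shows "P * (1 / (1 + 2 * \<i> * complex_of_real (1 / t)) ^ n
             - 1 / (1 - 2 * \<i> * complex_of_real (1 / t)) ^ n)
       = (P * of_real t) * of_real t ^ (n - 1) *
         (1 / (of_real t + 2 * \<i>) ^ n - 1 / (of_real t - 2 * \<i>) ^ n)"
proof -
  let ?T = "complex_of_real t"
  have T0: "?T \<noteq> 0" using assms by simp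
  have a: "1 + 2 * \<i> * complex_of_real (1 / t) = (?T + 2*\<i>) / ?T"
    using T0 by (simp add: field_simps)
  have b: "1 - 2 * \<i> * complex_of_real (1 / t) = (?T - 2*\<i>) / ?T"
    using T0 by (simp add: field_simps)
  have n: "?T ^ n = ?T * ?T ^ (n-1)" using assms by (cases n) auto
  show ?thesis unfolding a b by (simp add: power_divide n algebra_simps)
qed

lemma g_lim: "(\<lambda>k::nat. 2^(k+1) * tan(pi/2^(k+1))) \<longlonglongrightarrow> pi"
proof -
  have L: "((\<lambda>x::real. tan x / x) \<longlongrightarrow> 1) (at 0)" by real_asymp
  have th: "(\<lambda>k::nat. pi/2^(k+1)) \<longlonglongrightarrow> 0" by real_asymp
  have f: "filterlim (\<lambda>k::nat. pi/2^(k+1)) (at 0) sequentially"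
    using th by (intro filterlim_atI) auto
  have "(\<lambda>k::nat. tan(pi/2^(k+1)) / (pi/2^(k+1))) \<longlonglongrightarrow> 1"
    using filterlim_compose[OF L f] by simp
  then have "(\<lambda>k::nat. pi * (tan(pi/2^(k+1)) / (pi/2^(k+1)))) \<longlonglongrightarrow> pi * 1"
    by (intro tendsto_mult) auto
  then show ?thesis by (simp add: mult.commute)
qed

theorem mainTheorem2:
  fixes m_max :: nat
  assumes "m_max \<ge> 1"
  shows "(\<lambda>k. \<i> * (2 ^ (k + 1) *
            (\<Sum>m = 1..m_max. (1 / of_nat (2 * m - 1)) *
              (1 / (1 + 2 * \<i> * complex_of_real (nested_rad k / sqrt (2 - nested_rad (k - 1)))) ^ (2 * m - 1)
             - 1 / (1 - 2 * \<i> * complex_of_real (nested_rad k / sqrt (2 - nested_rad (k - 1)))) ^ (2 * m - 1)))))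
         \<longlonglongrightarrow> complex_of_real pi"
proof -
  define t where "t k = tan (pi / 2^(k+1))" for k :: nat
  define T where "T k = complex_of_real (t k)" for k
  define F where "F k = \<i> * (\<Sum>m = 1..m_max. (1 / of_nat (2 * m - 1)) *
      (complex_of_real (2^(k+1) * t k) * T k ^ (2*m-1-1) *
         (1 / (T k + 2 * \<i>) ^ (2*m-1) - 1 / (T k - 2 * \<i>) ^ (2*m-1))))" for k
  have tpos: "t k > 0" if "k \<ge> 1" for k
  proof -
    have "(2::real) \<le> 2^k" using power_increasing[of 1 k "2::real"] that by simp
    then have "(1::real) \<le> 2^k" "(1::real) < 2^k" "(1::real) < 2*2^k" by linarith+
    then have "0 < pi / 2^(k+1)" "pi / 2^(k+1) < pi/2" by (auto simp: field_simps)
    then show ?thesis unfolding t_def by (intro tan_gt_zero) auto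
  qed
  have ev: "\<forall>\<^sub>F k in sequentially. F k = \<i> * (2 ^ (k + 1) *
            (\<Sum>m = 1..m_max. (1 / of_nat (2 * m - 1)) *
              (1 / (1 + 2 * \<i> * complex_of_real (nested_rad k / sqrt (2 - nested_rad (k - 1)))) ^ (2 * m - 1)
             - 1 / (1 - 2 * \<i> * complex_of_real (nested_rad k / sqrt (2 - nested_rad (k - 1)))) ^ (2 * m - 1))))"
    using eventually_ge_at_top[of 1]
  proof eventually_elim
    case (elim k)
    have "2 ^ (k + 1) *
            (\<Sum>m = 1..m_max. (1 / of_nat (2 * m - 1)) *
              (1 / (1 + 2 * \<i> * complex_of_real (nested_rad k / sqrt (2 - nested_rad (k - 1)))) ^ (2 * m - 1)
             - 1 / (1 - 2 * \<i> * complex_of_real (nested_rad k / sqrt (2 - nested_rad (k - 1)))) ^ (2 * m - 1)))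
        = (\<Sum>m = 1..m_max. (1 / of_nat (2 * m - 1)) * (complex_of_real (2^(k+1)) *
              (1 / (1 + 2 * \<i> * complex_of_real (1 / t k)) ^ (2 * m - 1)
             - 1 / (1 - 2 * \<i> * complex_of_real (1 / t k)) ^ (2 * m - 1))))"
      unfolding ratio[OF elim] t_def[symmetric] sum_distrib_left by (intro sum.cong) auto
    also have "\<dots> = (\<Sum>m = 1..m_max. (1 / of_nat (2 * m - 1)) *
      (complex_of_real (2^(k+1) * t k) * T k ^ (2*m-1-1) *
         (1 / (T k + 2 * \<i>) ^ (2*m-1) - 1 / (T k - 2 * \<i>) ^ (2*m-1))))"
      unfolding T_def by (intro sum.cong refl, subst pointwise[OF tpos[OF elim]]) auto
    finally show ?case unfolding F_def by simp
  qed
  have tl: "t \<longlonglongrightarrow> 0" unfolding t_def by real_asymp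
  have gl: "(\<lambda>k. 2^(k+1) * t k) \<longlonglongrightarrow> pi" unfolding t_def by (rule g_lim)
  have Tl: "T \<longlonglongrightarrow> 0" unfolding T_def using tendsto_of_real[OF tl] by simp
  have "F \<longlonglongrightarrow> \<i> * (\<Sum>m = 1..m_max. (1 / of_nat (2 * m - 1)) *
      (complex_of_real pi * 0 ^ (2*m-1-1) *
         (1 / (0 + 2 * \<i>) ^ (2*m-1) - 1 / (0 - 2 * \<i>) ^ (2*m-1))))"
    unfolding F_def
    by (intro tendsto_intros tendsto_of_real[OF gl] Tl) auto
  also have "\<i> * (\<Sum>m = 1..m_max. (1 / of_nat (2 * m - 1)) *
      (complex_of_real pi * 0 ^ (2*m-1-1) *
         (1 / (0 + 2 * \<i>) ^ (2*m-1) - 1 / (0 - 2 * \<i>) ^ (2*m-1))))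
     = \<i> * (\<Sum>m \<in> {1}. (1 / of_nat (2 * m - 1)) *
      (complex_of_real pi * 0 ^ (2*m-1-1) *
         (1 / (0 + 2 * \<i>) ^ (2*m-1) - 1 / (0 - 2 * \<i>) ^ (2*m-1))))"
    using assms by (intro arg_cong[where f="\<lambda>x. \<i> * x"] sum.mono_neutral_right) auto
  also have "\<dots> = complex_of_real pi" by (simp add: field_simps)
  finally show ?thesis using ev by (rule Lim_transform_eventually)
qed

end
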